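(* Let $X_1,X_2,\dots$ be a strictly stationary ergodic sequence with common distribution function $F$, let $h$ be measurable, $F^{-1}(t)=\inf\{x:F(x)\ge t\}$, $H(t)=h(F^{-1}(t))$, and let $1\le p<\infty$ with $\mathbf{E}|h(X_1)|^p<\infty$. Let $U_1,U_2,\dots$ be a strictly stationary ergodic sequence of random variables, each uniformly distributed on $[0,1]$, let $G_n$ be the empirical distribution function of $U_1,\dots,U_n$ and $G_n^{-1}(t)=\inf\{x:G_n(x)\ge t\}$. Then $$\int_0^1|H(G_n^{-1}(t))-H(t)|^p\,dt\to0\quad\text{almost surely}.$$
   Context: Note $\mathbf{E}|h(X_1)|^p=\int_0^1|H(t)|^p\,dt$. *)

theory Defs
  imports "HOL-Probability.Probability"
begin

definition seq_space :: "(nat \<Rightarrow> real) measure" where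
  "seq_space = PiM UNIV (\<lambda>_. borel)"

definition strictly_stationary :: "'a measure \<Rightarrow> (nat \<Rightarrow> 'a \<Rightarrow> real) \<Rightarrow> bool" where
  "strictly_stationary M X \<longleftrightarrow>
     (\<forall>i. X i \<in> borel_measurable M) \<and>
     distr M seq_space (\<lambda>\<omega> i. X (Suc i) \<omega>) = distr M seq_space (\<lambda>\<omega> i. X i \<omega>)"

definition ergodic_process :: "'a measure \<Rightarrow> (nat \<Rightarrow> 'a \<Rightarrow> real) \<Rightarrow> bool" where
  "ergodic_process M X \<longleftrightarrow>
     (\<forall>A \<in> sets seq_space. {x. (\<lambda>i. x (Suc i)) \<in> A} = A \<longrightarrow>
        measure M {\<omega> \<in> space M. (\<lambda>i. X i \<omega>) \<in> A} \<in> {0, 1})"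

definition gen_inv :: "(real \<Rightarrow> real) \<Rightarrow> real \<Rightarrow> real" where
  "gen_inv F t = Inf {x. t \<le> F x}"

definition emp_df :: "(nat \<Rightarrow> 'a \<Rightarrow> real) \<Rightarrow> nat \<Rightarrow> 'a \<Rightarrow> real \<Rightarrow> real" where
  "emp_df U n \<omega> x = real (card {i. i < n \<and> U i \<omega> \<le> x}) / real n"

end

theory Submission
  imports Defs
begin



definition shiftT :: "(nat \<Rightarrow> real) \<Rightarrow> (nat \<Rightarrow> real)" where
  "shiftT x = (\<lambda>i. x (Suc i))"
definition shk :: "nat \<Rightarrow> (nat \<Rightarrow> real) \<Rightarrow> (nat \<Rightarrow> real)" where
  "shk k x = (\<lambda>i. x (i + k))"

lemma space_seq_space[simp]: "space seq_space = UNIV"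
  by (simp add: seq_space_def space_PiM)

lemma measurable_shiftT[measurable]: "shiftT \<in> seq_space \<rightarrow>\<^sub>M seq_space"
  unfolding shiftT_def seq_space_def
  by (rule measurable_PiM_single') (auto simp: space_PiM)

lemma measurable_shk[measurable]: "shk k \<in> seq_space \<rightarrow>\<^sub>M seq_space"
  unfolding shk_def seq_space_def
  by (rule measurable_PiM_single') (auto simp: space_PiM)

lemma shk_Suc: "shk (Suc k) x = shk k (shiftT x)"
  by (simp add: shk_def shiftT_def)

lemma shk_Suc_fun: "shk (Suc k) = (\<lambda>x. shk k (shiftT x))"
  by (rule ext) (simp add: shk_Suc)

lemma shk_0[simp]: "shk 0 x = x"
  by (simp add: shk_def)

definition Ssum :: "((nat \<Rightarrow> real) \<Rightarrow> real) \<Rightarrow> nat \<Rightarrow> (nat \<Rightarrow> real) \<Rightarrow> real" where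
  "Ssum f n x = (\<Sum>k<n. f (shk k x))"

lemma Ssum_0[simp]: "Ssum f 0 x = 0" by (simp add: Ssum_def)

lemma Ssum_Suc: "Ssum f (Suc n) x = f x + Ssum f n (shiftT x)"
  unfolding Ssum_def by (subst sum.lessThan_Suc_shift) (simp add: shk_Suc)

fun Mx :: "((nat \<Rightarrow> real) \<Rightarrow> real) \<Rightarrow> nat \<Rightarrow> (nat \<Rightarrow> real) \<Rightarrow> real" where
  "Mx f 0 x = 0"
| "Mx f (Suc n) x = max (Mx f n x) (Ssum f (Suc n) x)"

lemma Mx_ge: "k \<le> n \<Longrightarrow> Ssum f k x \<le> Mx f n x"
  by (induction n) (auto simp: le_Suc_eq max.coboundedI1)

lemma Mx_nonneg: "0 \<le> Mx f n x"
  using Mx_ge[of 0 n f x] by simp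

lemma Mx_mono: "m \<le> n \<Longrightarrow> Mx f m x \<le> Mx f n x"
  by (induction n) (auto simp: le_Suc_eq intro: order.trans)

lemma Mx_cases: "Mx f n x = 0 \<or> (\<exists>k. 1 \<le> k \<and> k \<le> n \<and> Mx f n x = Ssum f k x)"
  by (induction n) (auto simp: max_def)

lemma Mx_key:
  assumes "0 < Mx f n x"
  shows "Mx f n x \<le> f x + Mx f n (shiftT x)"
proof -
  from Mx_cases[of f n x] assms obtain k where k: "1 \<le> k" "k \<le> n" "Mx f n x = Ssum f k x"
    by auto
  then obtain k' where k': "k = Suc k'" by (cases k) auto
  have "Mx f n x = f x + Ssum f k' (shiftT x)" using k k' Ssum_Suc by simp
  also have "\<dots> \<le> f x + Mx f n (shiftT x)" using Mx_ge[of k' n f] k k' by simp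
  finally show ?thesis .
qed

locale erg = prob_space P for P :: "(nat \<Rightarrow> real) measure" +
  assumes sets_P[measurable_cong]: "sets P = sets seq_space"
  and pres: "distr P seq_space shiftT = P"
  and ergo: "\<And>A. A \<in> sets seq_space \<Longrightarrow> {x. shiftT x \<in> A} = A \<Longrightarrow> measure P A \<in> {0,1}"
begin

lemma space_P[simp]: "space P = UNIV"
  using sets_eq_imp_space_eq[OF sets_P] by simp

lemma shiftT_P[measurable]: "shiftT \<in> P \<rightarrow>\<^sub>M P"
  using measurable_shiftT by (simp add: measurable_cong_sets[OF sets_P sets_P])

lemma meas_P_iff: "f \<in> borel_measurable P \<longleftrightarrow> f \<in> borel_measurable seq_space"
  by (simp add: measurable_cong_sets[OF sets_P refl])

lemma shk_P[measurable]: "shk k \<in> P \<rightarrow>\<^sub>M seq_space"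
  using measurable_shk by (simp add: measurable_cong_sets[OF sets_P refl])

lemma pres_k: "distr P seq_space (shk k) = P"
proof (induction k)
  case 0
  have "shk 0 = (\<lambda>x. x)" by (rule ext) simp
  then show ?case by (simp add: distr_id2 sets_P)
next
  case (Suc k)
  have "distr P seq_space (shk (Suc k)) = distr P seq_space (\<lambda>x. shk k (shiftT x))"
    by (simp add: shk_Suc_fun)
  also have "\<dots> = distr (distr P seq_space shiftT) seq_space (shk k)"
    by (subst distr_distr) (auto simp: comp_def)
  also have "\<dots> = P" using pres Suc by simp
  finally show ?case .
qed

lemma shk_int:
  fixes g :: "(nat \<Rightarrow> real) \<Rightarrow> real"
  assumes gm[measurable]: "g \<in> borel_measurable seq_space" and "integrable P g"
  shows "integrable P (\<lambda>x. g (shk k x))" "(\<integral>x. g (shk k x) \<partial>P) = integral\<^sup>L P g"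
proof -
  have "integrable (distr P seq_space (shk k)) g" using assms pres_k by simp
  then show "integrable P (\<lambda>x. g (shk k x))"
    using integrable_distr_eq[OF shk_P gm] by simp
  have "integral\<^sup>L (distr P seq_space (shk k)) g = (\<integral>x. g (shk k x) \<partial>P)"
    by (rule integral_distr) auto
  then show "(\<integral>x. g (shk k x) \<partial>P) = integral\<^sup>L P g" using pres_k by simp
qed

lemma shiftT_int:
  fixes g :: "(nat \<Rightarrow> real) \<Rightarrow> real"
  assumes [measurable]: "g \<in> borel_measurable seq_space" and "integrable P g"
  shows "integrable P (\<lambda>x. g (shiftT x))" "(\<integral>x. g (shiftT x) \<partial>P) = integral\<^sup>L P g"
  using shk_int[OF assms, of 1] by (simp_all add: shk_Suc[of 0, simplified])

end

lemma Ssum_meas[measurable]: assumes [measurable]: "f \<in> borel_measurable seq_space" shows "(\<lambda>x. Ssum f n x) \<in> borel_measurable seq_space"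
  unfolding Ssum_def by measurable

lemma Mx_0_fun[simp]: "Mx f 0 = (\<lambda>x. 0)"
  by (rule ext) simp

lemma Mx_Suc_fun: "Mx f (Suc n) = (\<lambda>x. max (Mx f n x) (Ssum f (Suc n) x))"
  by (rule ext) simp

lemma Mx_meas[measurable]: assumes [measurable]: "f \<in> borel_measurable seq_space" shows "(\<lambda>x. Mx f n x) \<in> borel_measurable seq_space"
proof (induction n)
  case (Suc n)
  note [measurable] = Suc
  show ?case unfolding Mx.simps by measurable
qed simp

context erg begin

lemma Ssum_int: "f \<in> borel_measurable seq_space \<Longrightarrow> integrable P f \<Longrightarrow> integrable P (\<lambda>x. Ssum f n x)"
  unfolding Ssum_def by (intro Bochner_Integration.integrable_sum) (auto intro: shk_int)

lemma Mx_int: "f \<in> borel_measurable seq_space \<Longrightarrow> integrable P f \<Longrightarrow> integrable P (\<lambda>x. Mx f n x)"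
proof (induction n)
  case (Suc n)
  then show ?case unfolding Mx.simps by (intro integrable_max Ssum_int) auto
qed simp

lemma maximal:
  assumes [measurable]: "f \<in> borel_measurable seq_space" and fi: "integrable P f"
  shows "0 \<le> (\<integral>x. indicator {x. 0 < Mx f n x} x * f x \<partial>P)"
proof -
  let ?m = "\<lambda>x. Mx f n x"
  have mi: "integrable P ?m" using Mx_int fi by simp
  have mTi: "integrable P (\<lambda>x. ?m (shiftT x))" "(\<integral>x. ?m (shiftT x) \<partial>P) = integral\<^sup>L P ?m"
    using shiftT_int[OF _ mi] by auto

  have pw: "?m x - ?m (shiftT x) \<le> indicator {x. 0 < Mx f n x} x * f x" for x
  proof (cases "0 < ?m x")
    case True
    then show ?thesis using Mx_key[OF True] by simp
  next
    case False
    then have "?m x = 0" using Mx_nonneg[of f n x] by simp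
    then show ?thesis using False Mx_nonneg[of f n "shiftT x"] by simp
  qed
  have "{x \<in> space seq_space. 0 < Mx f n x} \<in> sets seq_space" by measurable
  then have A: "{x. 0 < Mx f n x} \<in> sets P" by (simp add: sets_P)
  have "0 = (\<integral>x. ?m x - ?m (shiftT x) \<partial>P)"
    using mi mTi by simp
  also have "\<dots> \<le> (\<integral>x. indicator {x. 0 < Mx f n x} x * f x \<partial>P)"
    by (intro integral_mono pw Bochner_Integration.integrable_diff mi mTi integrable_mult_indicator[OF A fi, simplified])
  finally show ?thesis .
qed

end

lemma freq_shift2:
  fixes a b :: "nat \<Rightarrow> real"
  assumes "q2 < q" "\<forall>m. \<exists>n>m. real n * q < a n" "\<And>n. a n \<le> b (Suc n) + C"
  shows "\<forall>m. \<exists>n>m. real n * q2 < b n"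
proof
  fix m
  obtain N :: nat where N: "(q2 + C) / (q - q2) < N" using reals_Archimedean2 by blast
  from assms(2) obtain n where n: "n > max m N" "real n * q < a n" by blast
  have "real N * (q - q2) \<le> real n * (q - q2)" using n assms(1) by (intro mult_right_mono) auto
  moreover have "q2 + C < real N * (q - q2)" using N assms(1) by (simp add: field_simps)
  ultimately have "real (Suc n) * q2 < b (Suc n)" using n assms(3)[of n] by (simp add: algebra_simps)
  then show "\<exists>n>m. real n * q2 < b n" using n by (intro exI[of _ "Suc n"]) auto
qed

lemma freq_shift1:
  fixes a b :: "nat \<Rightarrow> real"
  assumes "q2 < q" "\<forall>m. \<exists>n>m. real n * q < a n" "\<And>n. n \<ge> 1 \<Longrightarrow> a n \<le> b (n - 1) + C"
  shows "\<forall>m. \<exists>n>m. real n * q2 < b n"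
proof
  fix m
  obtain N :: nat where N: "(C - q2) / (q - q2) < N" using reals_Archimedean2 by blast
  from assms(2) obtain n where n: "n > max (Suc m) N" "real n * q < a n" by blast
  have "real N * (q - q2) \<le> real n * (q - q2)" using n assms(1) by (intro mult_right_mono) auto
  moreover have "C - q2 < real N * (q - q2)" using N assms(1) by (simp add: field_simps)
  moreover have "real (n - 1) = real n - 1" using n by (simp add: of_nat_diff)
  ultimately have "real (n - 1) * q2 < b (n - 1)" using n assms(3)[of n] by (simp add: algebra_simps)
  then show "\<exists>n>m. real n * q2 < b n" using n by (intro exI[of _ "n - 1"]) auto
qed

context erg begin

lemma upper:
  assumes fm[measurable]: "f \<in> borel_measurable seq_space" and fi: "integrable P f"
    and c: "integral\<^sup>L P f < c"
  shows "AE x in P. eventually (\<lambda>n. Ssum f n x \<le> real n * c) sequentially"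
proof -
  define c' where "c' = (integral\<^sup>L P f + c) / 2"
  have c'1: "integral\<^sup>L P f < c'" and c'2: "c' < c" using c by (auto simp: c'_def)
  define J where "J = {x. \<exists>q::rat. c' < of_rat q \<and> (\<forall>m. \<exists>n>m. real n * of_rat q < Ssum f n x)}"
  have Jm: "J \<in> sets seq_space"
  proof -
    have "{x \<in> space seq_space. \<exists>q::rat. c' < of_rat q \<and> (\<forall>m. \<exists>n>m. real n * of_rat q < Ssum f n x)} \<in> sets seq_space"
      by measurable
    then show ?thesis by (simp add: J_def)
  qed
  have Jinv: "{x. shiftT x \<in> J} = J"
  proof (intro set_eqI iffI)
    fix x assume "x \<in> {x. shiftT x \<in> J}"
    then obtain q where q: "c' < of_rat q" "\<forall>m. \<exists>n>m. real n * of_rat q < Ssum f n (shiftT x)"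
      by (auto simp: J_def)
    obtain r where r: "r \<in> \<rat>" "c' < r" "r < of_rat q" using Rats_dense_in_real[OF q(1)] by auto
    then obtain q2 where q2: "r = of_rat q2" by (auto elim: Rats_cases)
    have "\<forall>m. \<exists>n>m. real n * r < Ssum f n x"
      by (rule freq_shift2[OF r(3) q(2), where C="- f x"]) (simp add: Ssum_Suc)
    then show "x \<in> J" using r q2 by (auto simp: J_def)
  next
    fix x assume "x \<in> J"
    then obtain q where q: "c' < of_rat q" "\<forall>m. \<exists>n>m. real n * of_rat q < Ssum f n x"
      by (auto simp: J_def)
    obtain r where r: "r \<in> \<rat>" "c' < r" "r < of_rat q" using Rats_dense_in_real[OF q(1)] by auto
    then obtain q2 where q2: "r = of_rat q2" by (auto elim: Rats_cases)
    have "\<forall>m. \<exists>n>m. real n * r < Ssum f n (shiftT x)"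
    proof (rule freq_shift1[OF r(3) q(2), where C="f x"])
      fix n :: nat assume "1 \<le> n"
      then have "n = Suc (n - 1)" by simp
      then have "Ssum f n x = f x + Ssum f (n - 1) (shiftT x)" using Ssum_Suc[of f "n - 1" x] by simp
      then show "Ssum f n x \<le> Ssum f (n - 1) (shiftT x) + f x" by simp
    qed
    then show "x \<in> {x. shiftT x \<in> J}" using r q2 by (auto simp: J_def)
  qed
  have "measure P J \<in> {0,1}" using ergo[OF Jm Jinv] .
  moreover have "measure P J \<noteq> 1"
  proof
    assume J1: "measure P J = 1"
    have JmP: "J \<in> sets P" using Jm by (simp add: sets_P)
    have AEJ: "AE x in P. x \<in> J" using J1 JmP by (subst AE_in_set_eq_1) auto
    define g where "g x = f x - c'" for x
    have gm[measurable]: "g \<in> borel_measurable seq_space" unfolding g_def by measurable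
    have gi: "integrable P g" unfolding g_def using fi by auto
    have Sg: "Ssum g n x = Ssum f n x - real n * c'" for n x
      unfolding Ssum_def g_def by (simp add: sum_subtractf)
    have ev: "eventually (\<lambda>k. 0 < Mx g k x) sequentially" if "x \<in> J" for x
    proof -
      from that obtain q where q: "c' < of_rat q" "\<forall>m. \<exists>n>m. real n * of_rat q < Ssum f n x"
        by (auto simp: J_def)
      then obtain n where n: "n > 0" "real n * of_rat q < Ssum f n x" by blast
      have le: "real n * c' \<le> real n * of_rat q" using q(1) by (intro mult_left_mono) auto
      have "0 < Ssum g n x" using n(2) Sg[of n x] le by linarith
      then have "0 < Mx g k x" if "k \<ge> n" for k using Mx_ge[of n k g x] that by simp
      then show ?thesis by (auto simp: eventually_sequentially)
    qed
    have "{x \<in> space seq_space. 0 < Mx g k x} \<in> sets seq_space" for k by measurable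
    then have Ak: "{x. 0 < Mx g k x} \<in> sets P" for k by (simp add: sets_P)
    have lim: "(\<lambda>k. \<integral>x. indicator {x. 0 < Mx g k x} x * g x \<partial>P) \<longlonglongrightarrow> (\<integral>x. g x \<partial>P)"
    proof (rule integral_dominated_convergence[where w="\<lambda>x. norm (g x)"])
      show "g \<in> borel_measurable P" by (simp add: meas_P_iff)
      show "(\<lambda>x. indicator {x. 0 < Mx g k x} x * g x) \<in> borel_measurable P" for k
        using Ak[of k] gm by (simp add: meas_P_iff[symmetric])
      show "integrable P (\<lambda>x. norm (g x))" using gi by auto
      show "AE x in P. (\<lambda>k. indicator {x. 0 < Mx g k x} x * g x) \<longlonglongrightarrow> g x"
        using AEJ
      proof eventually_elim
        fix x assume "x \<in> J"
        have "eventually (\<lambda>k. indicator {x. 0 < Mx g k x} x * g x = g x) sequentially"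
          using ev[OF \<open>x \<in> J\<close>] by (rule eventually_mono) simp
        then show "(\<lambda>k. indicator {x. 0 < Mx g k x} x * g x) \<longlonglongrightarrow> g x"
          by (rule tendsto_eventually)
      qed
      show "AE x in P. norm (indicator {x. 0 < Mx g k x} x * g x) \<le> norm (g x)" for k
        by (auto simp: indicator_def)
    qed
    have "0 \<le> (\<integral>x. g x \<partial>P)"
      by (rule LIMSEQ_le_const[OF lim]) (auto intro: maximal[OF gm gi])
    moreover have "(\<integral>x. g x \<partial>P) = integral\<^sup>L P f - c'"
      unfolding g_def using fi prob_space space_P by (simp add: Bochner_Integration.integral_diff del: space_P)
    ultimately show False using c'1 by simp
  qed
  ultimately have J0: "measure P J = 0" by auto
  have "AE x in P. x \<notin> J"
    using J0 Jm by (intro AE_not_in) (simp add: emeasure_eq_measure sets_P null_setsI)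
  then show ?thesis
  proof eventually_elim
    fix x assume "x \<notin> J"
    obtain r where r: "r \<in> \<rat>" "c' < r" "r < c" using Rats_dense_in_real[OF c'2] by auto
    then obtain q where q: "r = of_rat q" by (auto elim: Rats_cases)
    with \<open>x \<notin> J\<close> r have "\<not> (\<forall>m. \<exists>n>m. real n * r < Ssum f n x)" by (auto simp: J_def)
    then obtain m where m: "\<And>n. n > m \<Longrightarrow> Ssum f n x \<le> real n * r" by (metis not_less)
    have "Ssum f n x \<le> real n * c" if "n \<ge> Suc m" for n
    proof -
      have "Ssum f n x \<le> real n * r" using m that by simp
      also have "\<dots> \<le> real n * c" using r by (intro mult_left_mono) auto
      finally show ?thesis .
    qed
    then show "eventually (\<lambda>n. Ssum f n x \<le> real n * c) sequentially"
      by (auto simp: eventually_sequentially)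
  qed
qed


lemma birkhoff:
  assumes fm[measurable]: "f \<in> borel_measurable seq_space" and fi: "integrable P f"
  shows "AE x in P. (\<lambda>n. Ssum f n x / real n) \<longlonglongrightarrow> integral\<^sup>L P f"
proof -
  let ?E = "integral\<^sup>L P f"
  have up: "AE x in P. \<forall>q::rat. ?E < of_rat q \<longrightarrow> eventually (\<lambda>n. Ssum f n x \<le> real n * of_rat q) sequentially"
  proof (subst AE_all_countable, intro allI)
    fix q :: rat
    show "AE x in P. ?E < of_rat q \<longrightarrow> eventually (\<lambda>n. Ssum f n x \<le> real n * of_rat q) sequentially"
      by (cases "?E < of_rat q") (auto intro: upper[OF fm fi])
  qed
  have fm': "(\<lambda>x. - f x) \<in> borel_measurable seq_space" by measurable
  have fi': "integrable P (\<lambda>x. - f x)" using fi by auto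
  have Sneg: "Ssum (\<lambda>x. - f x) n x = - Ssum f n x" for n x by (simp add: Ssum_def sum_negf)
  have lo: "AE x in P. \<forall>q::rat. of_rat q < ?E \<longrightarrow> eventually (\<lambda>n. real n * of_rat q \<le> Ssum f n x) sequentially"
  proof (subst AE_all_countable, intro allI)
    fix q :: rat
    show "AE x in P. of_rat q < ?E \<longrightarrow> eventually (\<lambda>n. real n * of_rat q \<le> Ssum f n x) sequentially"
    proof (cases "of_rat q < ?E")
      case True
      then have "(\<integral>x. - f x \<partial>P) < - of_rat q" by simp
      from upper[OF fm' fi' this] show ?thesis
        by eventually_elim (auto simp: Sneg elim!: eventually_mono)
    qed auto
  qed
  from up lo show ?thesis
  proof eventually_elim
    fix x
    assume up: "\<forall>q::rat. ?E < of_rat q \<longrightarrow> eventually (\<lambda>n. Ssum f n x \<le> real n * of_rat q) sequentially"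
      and lo: "\<forall>q::rat. of_rat q < ?E \<longrightarrow> eventually (\<lambda>n. real n * of_rat q \<le> Ssum f n x) sequentially"
    show "(\<lambda>n. Ssum f n x / real n) \<longlonglongrightarrow> ?E"
    proof (rule order_tendstoI)
      fix a assume "?E < a"
      obtain r where r: "r \<in> \<rat>" "?E < r" "r < a" using Rats_dense_in_real[OF \<open>?E < a\<close>] by auto
      then obtain q where q: "r = of_rat q" by (auto elim: Rats_cases)
      have "eventually (\<lambda>n. Ssum f n x \<le> real n * r \<and> n \<ge> 1) sequentially"
        using up r q by (auto intro: eventually_conj simp: eventually_ge_at_top)
      then show "eventually (\<lambda>n. Ssum f n x / real n < a) sequentially"
      proof (rule eventually_mono)
        fix n assume n: "Ssum f n x \<le> real n * r \<and> n \<ge> 1"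
        then have "Ssum f n x / real n \<le> r" by (simp add: divide_le_eq mult.commute)
        then show "Ssum f n x / real n < a" using r by simp
      qed
    next
      fix a assume "a < ?E"
      obtain r where r: "r \<in> \<rat>" "a < r" "r < ?E" using Rats_dense_in_real[OF \<open>a < ?E\<close>] by auto
      then obtain q where q: "r = of_rat q" by (auto elim: Rats_cases)
      have "eventually (\<lambda>n. real n * r \<le> Ssum f n x \<and> n \<ge> 1) sequentially"
        using lo r q by (auto intro: eventually_conj simp: eventually_ge_at_top)
      then show "eventually (\<lambda>n. a < Ssum f n x / real n) sequentially"
      proof (rule eventually_mono)
        fix n assume n: "real n * r \<le> Ssum f n x \<and> n \<ge> 1"
        then have "r \<le> Ssum f n x / real n" by (simp add: le_divide_eq mult.commute)
        then show "a < Ssum f n x / real n" using r by simp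
      qed
    qed
  qed
qed

end

lemma birkhoff_proc:
  assumes M: "prob_space M" and st: "strictly_stationary M U" and er: "ergodic_process M U"
    and g[measurable]: "g \<in> borel_measurable borel" and gi: "integrable M (\<lambda>\<omega>. g (U 0 \<omega>))"
  shows "AE \<omega> in M. (\<lambda>n. (\<Sum>i<n. g (U i \<omega>)) / real n) \<longlonglongrightarrow> (\<integral>\<omega>. g (U 0 \<omega>) \<partial>M)"
proof -
  interpret M: prob_space M by fact
  have Um[measurable]: "U i \<in> borel_measurable M" for i using st by (simp add: strictly_stationary_def)
  define path where "path \<omega> = (\<lambda>i. U i \<omega>)" for \<omega>
  have pm[measurable]: "path \<in> M \<rightarrow>\<^sub>M seq_space"
    unfolding path_def seq_space_def by (rule measurable_PiM_single') (auto simp: space_PiM)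
  define P where "P = distr M seq_space path"
  have "erg P"
  proof (intro erg.intro erg_axioms.intro)
    show "prob_space P" unfolding P_def by (rule M.prob_space_distr) simp
    show "sets P = sets seq_space" by (simp add: P_def)
    have "distr P seq_space shiftT = distr M seq_space (\<lambda>\<omega>. shiftT (path \<omega>))"
      unfolding P_def by (subst distr_distr) (auto simp: comp_def)
    also have "(\<lambda>\<omega>. shiftT (path \<omega>)) = (\<lambda>\<omega> i. U (Suc i) \<omega>)"
      by (auto simp: shiftT_def path_def)
    also have "distr M seq_space (\<lambda>\<omega> i. U (Suc i) \<omega>) = P"
      using st by (simp add: strictly_stationary_def P_def path_def[abs_def])
    finally show "distr P seq_space shiftT = P" .
    fix A assume A: "A \<in> sets seq_space" "{x. shiftT x \<in> A} = A"
    have "measure P A = measure M (path -` A \<inter> space M)"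
      unfolding P_def using A by (simp add: measure_distr)
    also have "path -` A \<inter> space M = {\<omega> \<in> space M. (\<lambda>i. U i \<omega>) \<in> A}"
      by (auto simp: path_def)
    finally show "measure P A \<in> {0, 1}"
      using er A unfolding ergodic_process_def shiftT_def by simp
  qed
  then interpret erg P .
  define f where "f x = g (x 0)" for x :: "nat \<Rightarrow> real"
  have fm[measurable]: "f \<in> borel_measurable seq_space" unfolding f_def seq_space_def by measurable
  have fi: "integrable P f" unfolding P_def using integrable_distr_eq[OF pm fm] gi
    by (simp add: f_def path_def)
  have E: "integral\<^sup>L P f = (\<integral>\<omega>. g (U 0 \<omega>) \<partial>M)"
    unfolding P_def by (subst integral_distr[OF pm fm]) (simp add: f_def path_def)
  have "AE \<omega> in M. (\<lambda>n. Ssum f n (path \<omega>) / real n) \<longlonglongrightarrow> integral\<^sup>L P f"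
    by (rule AE_distrD[OF pm]) (use birkhoff[OF fm fi] in \<open>simp only: P_def\<close>)
  moreover have "Ssum f n (path \<omega>) = (\<Sum>i<n. g (U i \<omega>))" for n \<omega>
    by (simp add: Ssum_def f_def path_def shk_def)
  ultimately show ?thesis using E by simp
qed




abbreviation Q :: "real measure" where "Q \<equiv> restrict_space lborel {0<..<1::real}"

lemma space_Q: "space Q = {0<..<1}"
  by (simp add: space_restrict_space)

lemma sets_Q: "sets Q = sets (restrict_space borel {0<..<1::real})"
  by (simp add: sets_restrict_space)

lemma Q_prob: "prob_space Q"
  by (auto simp add: emeasure_restrict_space space_restrict_space intro!: prob_spaceI)

lemma Qmeas: "f \<in> borel_measurable borel \<Longrightarrow> f \<in> borel_measurable Q"
  by (rule measurable_restrict_space1) simp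

lemma quantile:
  assumes "real_distribution \<mu>"
  shows "distr Q borel (gen_inv (cdf \<mu>)) = \<mu>" "gen_inv (cdf \<mu>) \<in> borel_measurable Q"
proof -
  interpret cdf_distribution \<mu> using assms by (simp add: cdf_distribution_def)
  have eq: "gen_inv (cdf \<mu>) = (\<lambda>t. Inf {x. t \<le> cdf \<mu> x})" by (rule ext) (simp add: gen_inv_def)
  show "distr Q borel (gen_inv (cdf \<mu>)) = \<mu>" unfolding eq by (rule distr_I_eq_M)
  show "gen_inv (cdf \<mu>) \<in> borel_measurable Q" unfolding eq
    using measurable_CI by (simp add: measurable_cong_sets[OF sets_Q refl])
qed

lemma quantile_nn:
  assumes "real_distribution \<mu>" and [measurable]: "\<psi> \<in> borel_measurable borel"
  shows "(\<integral>\<^sup>+t. \<psi> (gen_inv (cdf \<mu>) t) \<partial>Q) = (\<integral>\<^sup>+y. \<psi> y \<partial>\<mu>)"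
proof -
  have m: "gen_inv (cdf \<mu>) \<in> Q \<rightarrow>\<^sub>M borel" using quantile(2)[OF assms(1)] .
  have "(\<integral>\<^sup>+y. \<psi> y \<partial>\<mu>) = (\<integral>\<^sup>+y. \<psi> y \<partial>distr Q borel (gen_inv (cdf \<mu>)))"
    using quantile(1)[OF assms(1)] by simp
  also have "\<dots> = (\<integral>\<^sup>+t. \<psi> (gen_inv (cdf \<mu>) t) \<partial>Q)"
    by (rule nn_integral_distr[OF m]) simp
  finally show ?thesis by simp
qed

lemma Q_to_lborel:
  fixes X :: "real \<Rightarrow> real"
  assumes "\<And>t. 0 \<le> X t"
  shows "(\<integral>\<^sup>+ t. ennreal (indicator {0..1} t * X t) \<partial>lborel) = (\<integral>\<^sup>+t. ennreal (X t) \<partial>Q)"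
proof -
  have "(\<integral>\<^sup>+t. ennreal (X t) \<partial>Q) = (\<integral>\<^sup>+t. ennreal (X t) * indicator {0<..<1} t \<partial>lborel)"
    by (rule nn_integral_restrict_space) simp
  also have "\<dots> = (\<integral>\<^sup>+ t. ennreal (indicator {0..1} t * X t) \<partial>lborel)"
  proof (rule nn_integral_cong_AE)
    show "AE t in lborel. ennreal (X t) * indicator {0<..<1} t = ennreal (indicator {0..1} t * X t)"
      using AE_lborel_singleton[of 0] AE_lborel_singleton[of 1]
      by eventually_elim (auto simp: indicator_def)
  qed
  finally show ?thesis by simp
qed

lemma nn_Q_const: "(\<integral>\<^sup>+t. ennreal c \<partial>Q) < \<infinity>"
proof -
  interpret prob_space Q by (rule Q_prob)
  show ?thesis using emeasure_space_1 by (simp add: space_Q ennreal_mult_less_top)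
qed

lemma powr_tri3:
  fixes a b c d p :: real
  assumes "0 < p"
  shows "\<bar>a - b\<bar> powr p \<le> 3 powr p * (\<bar>a - c\<bar> powr p + \<bar>c - d\<bar> powr p + \<bar>d - b\<bar> powr p)"
proof -
  define m where "m = max \<bar>a - c\<bar> (max \<bar>c - d\<bar> \<bar>d - b\<bar>)"
  have "\<bar>a - b\<bar> \<le> 3 * m" unfolding m_def by (smt (verit))
  then have "\<bar>a - b\<bar> powr p \<le> (3 * m) powr p" by (intro powr_mono2) (use assms in auto)
  also have "\<dots> = 3 powr p * m powr p" by (simp add: powr_mult m_def)
  also have "m powr p \<le> \<bar>a - c\<bar> powr p + \<bar>c - d\<bar> powr p + \<bar>d - b\<bar> powr p"
    unfolding m_def by (auto simp: max_def)
  then have "3 powr p * m powr p \<le> 3 powr p * (\<bar>a - c\<bar> powr p + \<bar>c - d\<bar> powr p + \<bar>d - b\<bar> powr p)"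
    by (intro mult_left_mono) auto
  finally show ?thesis .
qed

lemma powr_tri2:
  fixes a b c p :: real
  assumes "0 < p"
  shows "\<bar>a - b\<bar> powr p \<le> 2 powr p * (\<bar>a - c\<bar> powr p + \<bar>c - b\<bar> powr p)"
proof -
  define m where "m = max \<bar>a - c\<bar> \<bar>c - b\<bar>"
  have "\<bar>a - b\<bar> \<le> 2 * m" unfolding m_def by (smt (verit))
  then have "\<bar>a - b\<bar> powr p \<le> (2 * m) powr p" by (intro powr_mono2) (use assms in auto)
  also have "\<dots> = 2 powr p * m powr p" by (simp add: powr_mult m_def)
  also have "m powr p \<le> \<bar>a - c\<bar> powr p + \<bar>c - b\<bar> powr p"
    unfolding m_def by (auto simp: max_def)
  then have "2 powr p * m powr p \<le> 2 powr p * (\<bar>a - c\<bar> powr p + \<bar>c - b\<bar> powr p)"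
    by (intro mult_left_mono) auto
  finally show ?thesis .
qed




lemma dom_Q:
  fixes u :: "nat \<Rightarrow> real \<Rightarrow> real" and w :: "real \<Rightarrow> real"
  assumes [measurable]: "\<And>i. u i \<in> borel_measurable Q" "w \<in> borel_measurable Q"
    and nn: "\<And>i t. t \<in> space Q \<Longrightarrow> 0 \<le> u i t"
    and le: "\<And>i t. t \<in> space Q \<Longrightarrow> u i t \<le> w t"
    and fin: "(\<integral>\<^sup>+t. w t \<partial>Q) < \<infinity>"
    and lim: "AE t in Q. (\<lambda>i. u i t) \<longlonglongrightarrow> 0"
  shows "(\<lambda>i. \<integral>\<^sup>+t. ennreal (u i t) \<partial>Q) \<longlonglongrightarrow> 0"
proof -
  have "(\<lambda>i. \<integral>\<^sup>+t. ennreal (norm ((\<lambda>t. 0::real) t - u i t)) \<partial>Q) \<longlonglongrightarrow> 0"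
  proof (rule nn_integral_dominated_convergence_norm[where w=w])
    show "AE x in Q. norm (u j x) \<le> w x" for j
      by (rule AE_I2) (use nn le in auto)
  qed (use fin lim in auto)
  moreover have "(\<integral>\<^sup>+t. ennreal (norm ((\<lambda>t. 0::real) t - u i t)) \<partial>Q) = (\<integral>\<^sup>+t. ennreal (u i t) \<partial>Q)" for i
    by (rule nn_integral_cong) (use nn in auto)
  ultimately show ?thesis by simp
qed

lemma approx_cont:
  fixes H :: "real \<Rightarrow> real" and p :: real
  assumes Hm[measurable]: "H \<in> borel_measurable borel" and p: "1 \<le> p"
    and fin: "(\<integral>\<^sup>+t. ennreal (\<bar>H t\<bar> powr p) \<partial>Q) < \<infinity>"
    and e: "0 < e"
  shows "\<exists>\<phi> B. continuous_on UNIV \<phi> \<and> (\<forall>x. \<bar>\<phi> x\<bar> \<le> B) \<and>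
           (\<integral>\<^sup>+t. ennreal (\<bar>H t - \<phi> t\<bar> powr p) \<partial>Q) < ennreal e"
proof -
  have p0: "0 < p" using p by simp
  define \<delta> where "\<delta> = e / (4 * 2 powr p)"
  have \<delta>0: "0 < \<delta>" using e by (simp add: \<delta>_def)
  define HK where "HK K t = max (- real K) (min (real K) (H t))" for K :: nat and t
  have HKm[measurable]: "HK K \<in> borel_measurable borel" for K unfolding HK_def by measurable
  have lim1: "(\<lambda>K. \<integral>\<^sup>+t. ennreal (\<bar>H t - HK K t\<bar> powr p) \<partial>Q) \<longlonglongrightarrow> 0"
  proof (rule dom_Q[where w="\<lambda>t. \<bar>H t\<bar> powr p"])
    show "(\<lambda>t. \<bar>H t - HK i t\<bar> powr p) \<in> borel_measurable Q" for i
      by (rule Qmeas) measurable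
    show "(\<lambda>t. \<bar>H t\<bar> powr p) \<in> borel_measurable Q" by (rule Qmeas) measurable
    show "\<bar>H t - HK i t\<bar> powr p \<le> \<bar>H t\<bar> powr p" for i t
    proof (rule powr_mono2)
      show "\<bar>H t - HK i t\<bar> \<le> \<bar>H t\<bar>" unfolding HK_def by (smt (verit) of_nat_0_le_iff)
    qed (use p in auto)
    show "AE t in Q. (\<lambda>i. \<bar>H t - HK i t\<bar> powr p) \<longlonglongrightarrow> 0"
    proof (rule AE_I2)
      fix t
      obtain N :: nat where N: "\<bar>H t\<bar> \<le> real N" using real_arch_simple by blast
      have "eventually (\<lambda>i. \<bar>H t - HK i t\<bar> powr p = 0) sequentially"
        unfolding eventually_sequentially
      proof (intro exI allI impI)
        fix i assume "N \<le> i"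
        then have "\<bar>H t\<bar> \<le> real i" using N by (smt (verit) of_nat_mono)
        then have "HK i t = H t" unfolding HK_def by auto
        then show "\<bar>H t - HK i t\<bar> powr p = 0" by simp
      qed
      then show "(\<lambda>i. \<bar>H t - HK i t\<bar> powr p) \<longlonglongrightarrow> 0" by (rule tendsto_eventually)
    qed
  qed (use fin in auto)
  then have "eventually (\<lambda>K. (\<integral>\<^sup>+t. ennreal (\<bar>H t - HK K t\<bar> powr p) \<partial>Q) < ennreal \<delta>) sequentially"
    using \<delta>0 by (intro order_tendstoD(2)) auto
  then obtain K where K: "(\<integral>\<^sup>+t. ennreal (\<bar>H t - HK K t\<bar> powr p) \<partial>Q) < ennreal \<delta>"
    by (auto simp: eventually_sequentially)
  have "HK K \<in> borel_measurable lborel" using HKm[of K] by simp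
  then have "HK K \<in> borel_measurable lebesgue" by (rule measurable_completion)
  then have "HK K measurable_on UNIV"
    by (intro lebesgue_measurable_imp_measurable_on) auto
  then obtain N g where N: "negligible N" and gc: "\<And>n. continuous_on UNIV (g n)"
    and gl: "\<And>x. x \<notin> N \<Longrightarrow> (\<lambda>n. g n x) \<longlonglongrightarrow> HK K x"
    unfolding measurable_on_def by auto
  define \<phi> where "\<phi> j x = max (- real K) (min (real K) (g j x))" for j x
  have \<phi>c: "continuous_on UNIV (\<phi> j)" for j
    unfolding \<phi>_def by (intro continuous_intros gc)
  have \<phi>m[measurable]: "\<phi> j \<in> borel_measurable borel" for j
    using \<phi>c by (rule borel_measurable_continuous_onI)
  have \<phi>b: "\<bar>\<phi> j x\<bar> \<le> real K" for j x unfolding \<phi>_def by auto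
  have HKb: "\<bar>HK K x\<bar> \<le> real K" for x unfolding HK_def by auto
  have "N \<in> null_sets lebesgue" using N negligible_iff_null_sets by blast
  then have "AE x in lebesgue. x \<notin> N" by (rule AE_not_in)
  then have "AE x in lborel. x \<notin> N" by (simp add: AE_completion_iff)
  then have AEN: "AE x in Q. x \<notin> N" by (subst AE_restrict_space_iff) (auto elim: AE_mp)
  have lim2: "(\<lambda>j. \<integral>\<^sup>+t. ennreal (\<bar>HK K t - \<phi> j t\<bar> powr p) \<partial>Q) \<longlonglongrightarrow> 0"
  proof (rule dom_Q[where w="\<lambda>t. (2 * real K) powr p"])
    show "(\<lambda>t. \<bar>HK K t - \<phi> i t\<bar> powr p) \<in> borel_measurable Q" for i
      by (rule Qmeas) measurable
    show "\<bar>HK K t - \<phi> i t\<bar> powr p \<le> (2 * real K) powr p" for i t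
    proof (rule powr_mono2)
      show "\<bar>HK K t - \<phi> i t\<bar> \<le> 2 * real K" using HKb[of t] \<phi>b[of i t] by linarith
    qed (use p in auto)
    show "(\<integral>\<^sup>+t. ennreal ((2 * real K) powr p) \<partial>Q) < \<infinity>" by (rule nn_Q_const)
    show "AE t in Q. (\<lambda>i. \<bar>HK K t - \<phi> i t\<bar> powr p) \<longlonglongrightarrow> 0"
      using AEN
    proof eventually_elim
      fix t assume "t \<notin> N"
      have "(\<lambda>i. \<phi> i t) \<longlonglongrightarrow> max (- real K) (min (real K) (HK K t))"
        unfolding \<phi>_def by (intro tendsto_intros gl \<open>t \<notin> N\<close>)
      also have "max (- real K) (min (real K) (HK K t)) = HK K t" using HKb[of t] by auto
      finally have "(\<lambda>i. HK K t - \<phi> i t) \<longlonglongrightarrow> 0"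
        using tendsto_diff[OF tendsto_const[of "HK K t"]] by fastforce
      then have "(\<lambda>i. \<bar>HK K t - \<phi> i t\<bar>) \<longlonglongrightarrow> 0" by (simp add: tendsto_rabs_zero_iff)
      then show "(\<lambda>i. \<bar>HK K t - \<phi> i t\<bar> powr p) \<longlonglongrightarrow> 0"
        using p0 by (intro tendsto_zero_powrI) auto
    qed
  qed auto
  then have "eventually (\<lambda>j. (\<integral>\<^sup>+t. ennreal (\<bar>HK K t - \<phi> j t\<bar> powr p) \<partial>Q) < ennreal \<delta>) sequentially"
    using \<delta>0 by (intro order_tendstoD(2)) auto
  then obtain j where j: "(\<integral>\<^sup>+t. ennreal (\<bar>HK K t - \<phi> j t\<bar> powr p) \<partial>Q) < ennreal \<delta>"
    by (auto simp: eventually_sequentially)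
  have "(\<integral>\<^sup>+t. ennreal (\<bar>H t - \<phi> j t\<bar> powr p) \<partial>Q)
      \<le> (\<integral>\<^sup>+t. ennreal (2 powr p) * (ennreal (\<bar>H t - HK K t\<bar> powr p) + ennreal (\<bar>HK K t - \<phi> j t\<bar> powr p)) \<partial>Q)"
  proof (rule nn_integral_mono)
    fix t
    have "\<bar>H t - \<phi> j t\<bar> powr p \<le> 2 powr p * (\<bar>H t - HK K t\<bar> powr p + \<bar>HK K t - \<phi> j t\<bar> powr p)"
      by (rule powr_tri2[OF p0])
    then show "ennreal (\<bar>H t - \<phi> j t\<bar> powr p) \<le> ennreal (2 powr p) * (ennreal (\<bar>H t - HK K t\<bar> powr p) + ennreal (\<bar>HK K t - \<phi> j t\<bar> powr p))"
      by (simp add: ennreal_plus[symmetric] ennreal_mult[symmetric] ennreal_leI del: ennreal_plus)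
  qed
  also have "\<dots> = ennreal (2 powr p) * ((\<integral>\<^sup>+t. ennreal (\<bar>H t - HK K t\<bar> powr p) \<partial>Q) + (\<integral>\<^sup>+t. ennreal (\<bar>HK K t - \<phi> j t\<bar> powr p) \<partial>Q))"
  proof -
    have m1: "(\<lambda>t. ennreal (\<bar>H t - HK K t\<bar> powr p)) \<in> borel_measurable Q" by (rule Qmeas) measurable
    have m2: "(\<lambda>t. ennreal (\<bar>HK K t - \<phi> j t\<bar> powr p)) \<in> borel_measurable Q" by (rule Qmeas) measurable
    show ?thesis using m1 m2 by (simp add: nn_integral_cmult nn_integral_add)
  qed
  also have "\<dots> \<le> ennreal (2 powr p) * (ennreal \<delta> + ennreal \<delta>)"
    using K j by (intro mult_left_mono add_mono) auto
  also have "\<dots> = ennreal (e / 2)"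
    using \<delta>0 by (simp add: ennreal_plus[symmetric] ennreal_mult[symmetric] \<delta>_def field_simps del: ennreal_plus)
  also have "\<dots> < ennreal e" using e by (simp add: ennreal_lessI)
  finally show ?thesis using \<phi>c \<phi>b by blast
qed




definition empm :: "(nat \<Rightarrow> 'a \<Rightarrow> real) \<Rightarrow> nat \<Rightarrow> 'a \<Rightarrow> real measure" where
  "empm U n \<omega> = distr (measure_pmf (pmf_of_set {..<n})) borel (\<lambda>i. U i \<omega>)"

lemma pmf_meas: "f \<in> measurable (measure_pmf p) borel"
  by (auto simp: measurable_def)

lemma empm_real_dist:
  assumes "0 < n" shows "real_distribution (empm U n \<omega>)"
proof -
  show ?thesis unfolding empm_def real_distribution_def real_distribution_axioms_def
    by (auto intro!: measure_pmf.prob_space_distr pmf_meas)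
qed

lemma cdf_empm:
  assumes "0 < n" shows "cdf (empm U n \<omega>) = emp_df U n \<omega>"
proof (rule ext)
  fix x
  have ne: "{..<n} \<noteq> {}" using assms by auto
  have "cdf (empm U n \<omega>) x = measure (measure_pmf (pmf_of_set {..<n})) ((\<lambda>i. U i \<omega>) -` {..x})"
    unfolding cdf_def empm_def by (subst measure_distr) (auto simp: pmf_meas)
  also have "\<dots> = real (card ({..<n} \<inter> (\<lambda>i. U i \<omega>) -` {..x})) / real n"
    using ne by (subst measure_pmf_of_set) auto
  also have "{..<n} \<inter> (\<lambda>i. U i \<omega>) -` {..x} = {i. i < n \<and> U i \<omega> \<le> x}" by auto
  finally show "cdf (empm U n \<omega>) x = emp_df U n \<omega> x" by (simp add: emp_df_def)
qed

lemma nn_empm: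
  assumes "0 < n" and [measurable]: "\<psi> \<in> borel_measurable borel" and nn: "\<And>y. 0 \<le> \<psi> y"
  shows "(\<integral>\<^sup>+y. ennreal (\<psi> y) \<partial>empm U n \<omega>) = ennreal ((\<Sum>i<n. \<psi> (U i \<omega>)) / real n)"
proof -
  have ne: "{..<n} \<noteq> {}" using assms by auto
  have "(\<integral>\<^sup>+y. ennreal (\<psi> y) \<partial>empm U n \<omega>) = (\<integral>\<^sup>+i. ennreal (\<psi> (U i \<omega>)) \<partial>measure_pmf (pmf_of_set {..<n}))"
    unfolding empm_def by (subst nn_integral_distr) (auto simp: pmf_meas)
  also have "\<dots> = (\<Sum>i<n. ennreal (\<psi> (U i \<omega>))) / of_nat n"
    using ne by (subst nn_integral_pmf_of_set) auto
  also have "\<dots> = ennreal ((\<Sum>i<n. \<psi> (U i \<omega>)) / real n)"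
    using assms nn by (simp add: sum_nonneg ennreal_of_nat_eq_real_of_nat divide_ennreal)
  finally show ?thesis .
qed

lemma emp_df_mono: "x \<le> y \<Longrightarrow> emp_df U n \<omega> x \<le> emp_df U n \<omega> y"
  unfolding emp_df_def by (intro divide_right_mono of_nat_mono card_mono) auto

lemma ginv_conv:
  fixes G :: "nat \<Rightarrow> real \<Rightarrow> real"
  assumes mono: "\<And>n x y. x \<le> y \<Longrightarrow> G n x \<le> G n y"
    and conv: "\<And>q. q \<in> \<rat> \<Longrightarrow> 0 < q \<Longrightarrow> q < 1 \<Longrightarrow> (\<lambda>n. G n q) \<longlonglongrightarrow> q"
    and t: "0 < t" "t < 1"
  shows "(\<lambda>n. gen_inv (G n) t) \<longlonglongrightarrow> t"
proof -
  have key: "eventually (\<lambda>n. r \<le> gen_inv (G n) t \<and> gen_inv (G n) t \<le> r2) sequentially"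
    if r: "r \<in> \<rat>" "0 < r" "r < t" and r2: "r2 \<in> \<rat>" "t < r2" "r2 < 1" for r r2
  proof -
    have "eventually (\<lambda>n. G n r < t) sequentially"
      using conv[OF r(1) r(2)] r(3) t by (intro order_tendstoD(2)) auto
    moreover have "eventually (\<lambda>n. t < G n r2) sequentially"
      using conv[OF r2(1)] r2 t by (intro order_tendstoD(1)) auto
    ultimately show ?thesis
    proof eventually_elim
      fix n assume a: "G n r < t" "t < G n r2"
      let ?S = "{x. t \<le> G n x}"
      have r2S: "r2 \<in> ?S" using a by simp
      have lb: "r \<le> x" if "x \<in> ?S" for x
      proof (rule ccontr)
        assume "\<not> r \<le> x" then have "G n x \<le> G n r" using mono by simp
        with that a show False by simp
      qed
      have "r \<le> Inf ?S" using r2S lb by (intro cInf_greatest) auto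
      moreover have "Inf ?S \<le> r2" using r2S lb by (intro cInf_lower) (auto simp: bdd_below_def)
      ultimately show "r \<le> gen_inv (G n) t \<and> gen_inv (G n) t \<le> r2" by (simp add: gen_inv_def)
    qed
  qed
  obtain r0 where r0: "r0 \<in> \<rat>" "0 < r0" "r0 < t" using Rats_dense_in_real[OF t(1)] by auto
  obtain r1 where r1: "r1 \<in> \<rat>" "t < r1" "r1 < 1" using Rats_dense_in_real[OF t(2)] by auto
  show ?thesis
  proof (rule order_tendstoI)
    fix a assume "a < t"
    then obtain r where r: "r \<in> \<rat>" "max a 0 < r" "r < t" using Rats_dense_in_real[of "max a 0" t] t by auto
    show "eventually (\<lambda>n. a < gen_inv (G n) t) sequentially"
      using key[of r r1] r r1 by (auto elim: eventually_mono)
  next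
    fix b assume "t < b"
    then obtain r where r: "r \<in> \<rat>" "t < r" "r < min b 1" using Rats_dense_in_real[of t "min b 1"] t by auto
    show "eventually (\<lambda>n. gen_inv (G n) t < b) sequentially"
      using key[of r0 r] r r0 by (auto elim: eventually_mono)
  qed
qed




lemma unif_nn:
  assumes M: "prob_space M" and Um[measurable]: "U \<in> borel_measurable M"
    and d: "distr M borel U = uniform_measure lborel {0..1}"
    and f[measurable]: "f \<in> borel_measurable borel"
  shows "(\<integral>\<^sup>+\<omega>. f (U \<omega>) \<partial>M) = (\<integral>\<^sup>+t. f t \<partial>Q)"
proof -
  have "(\<integral>\<^sup>+\<omega>. f (U \<omega>) \<partial>M) = (\<integral>\<^sup>+y. f y \<partial>distr M borel U)"
    by (simp add: nn_integral_distr)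
  also have "\<dots> = (\<integral>\<^sup>+y. f y \<partial>uniform_measure lborel {0..1})" using d by simp
  also have "\<dots> = (\<integral>\<^sup>+y. f y * indicator {0..1} y \<partial>lborel)"
    by (subst nn_integral_uniform_measure) (auto simp: divide_ennreal_def)
  also have "\<dots> = (\<integral>\<^sup>+y. f y * indicator {0<..<1} y \<partial>lborel)"
  proof (rule nn_integral_cong_AE)
    show "AE y in lborel. f y * indicator {0..1} y = f y * indicator {0<..<1} y"
      using AE_lborel_singleton[of 0] AE_lborel_singleton[of 1]
      by eventually_elim (auto simp: indicator_def)
  qed
  also have "\<dots> = (\<integral>\<^sup>+t. f t \<partial>Q)"
    by (rule nn_integral_restrict_space[symmetric]) simp
  finally show ?thesis .
qed

lemma erg_real:
  assumes M: "prob_space M" and st: "strictly_stationary M U" and er: "ergodic_process M U"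
    and d: "\<And>i. distr M borel (U i) = uniform_measure lborel {0..1}"
    and g[measurable]: "g \<in> borel_measurable borel" and gnn: "\<And>t. 0 \<le> g t"
    and gfin: "(\<integral>\<^sup>+t. ennreal (g t) \<partial>Q) < \<infinity>"
  shows "AE \<omega> in M. (\<lambda>n. (\<Sum>i<n. g (U i \<omega>)) / real n) \<longlonglongrightarrow> enn2real (\<integral>\<^sup>+t. ennreal (g t) \<partial>Q)"
proof -
  have Um[measurable]: "U i \<in> borel_measurable M" for i using st by (simp add: strictly_stationary_def)
  have u: "(\<integral>\<^sup>+\<omega>. ennreal (g (U 0 \<omega>)) \<partial>M) = (\<integral>\<^sup>+t. ennreal (g t) \<partial>Q)"
    by (rule unif_nn[OF M Um d]) simp
  have int: "integrable M (\<lambda>\<omega>. g (U 0 \<omega>))"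
    by (rule integrableI_nonneg) (use u gfin gnn in auto)
  have E: "(\<integral>\<omega>. g (U 0 \<omega>) \<partial>M) = enn2real (\<integral>\<^sup>+t. ennreal (g t) \<partial>Q)"
    by (subst integral_eq_nn_integral) (use gnn u in auto)
  show ?thesis using birkhoff_proc[OF M st er g int] E by simp
qed

lemma erg_nn:
  assumes M: "prob_space M" and st: "strictly_stationary M U" and er: "ergodic_process M U"
    and d: "\<And>i. distr M borel (U i) = uniform_measure lborel {0..1}"
    and g[measurable]: "g \<in> borel_measurable borel" and gnn: "\<And>t. 0 \<le> g t"
    and gfin: "(\<integral>\<^sup>+t. ennreal (g t) \<partial>Q) < \<infinity>"
  shows "AE \<omega> in M. (\<lambda>n. ennreal ((\<Sum>i<n. g (U i \<omega>)) / real n)) \<longlonglongrightarrow> (\<integral>\<^sup>+t. ennreal (g t) \<partial>Q)"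
  using erg_real[OF assms]
proof eventually_elim
  fix \<omega> assume "(\<lambda>n. (\<Sum>i<n. g (U i \<omega>)) / real n) \<longlonglongrightarrow> enn2real (\<integral>\<^sup>+t. ennreal (g t) \<partial>Q)"
  then have "(\<lambda>n. ennreal ((\<Sum>i<n. g (U i \<omega>)) / real n)) \<longlonglongrightarrow> ennreal (enn2real (\<integral>\<^sup>+t. ennreal (g t) \<partial>Q))"
    by (rule tendsto_ennrealI)
  then show "(\<lambda>n. ennreal ((\<Sum>i<n. g (U i \<omega>)) / real n)) \<longlonglongrightarrow> (\<integral>\<^sup>+t. ennreal (g t) \<partial>Q)"
    using gfin by (simp add: ennreal_enn2real_if less_top[symmetric])
qed


lemma main_omega:
  fixes H H' :: "real \<Rightarrow> real" and \<phi> :: "nat \<Rightarrow> real \<Rightarrow> real" and B :: "nat \<Rightarrow> real"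
    and U :: "nat \<Rightarrow> 'a \<Rightarrow> real" and p :: real
  assumes p: "1 \<le> p"
    and Hm: "H \<in> borel_measurable Q" and H'm[measurable]: "H' \<in> borel_measurable borel"
    and H'Q: "\<And>t. t \<in> {0<..<1} \<Longrightarrow> H' t = H t"
    and \<phi>c: "\<And>m. continuous_on UNIV (\<phi> m)" and \<phi>b: "\<And>m x. \<bar>\<phi> m x\<bar> \<le> B m"
    and \<phi>a: "\<And>m. (\<integral>\<^sup>+t. ennreal (\<bar>H' t - \<phi> m t\<bar> powr p) \<partial>Q) < ennreal (1 / Suc m)"
    and G1: "\<forall>q::rat. 0 < (of_rat q::real) \<and> of_rat q < (1::real) \<longrightarrow> (\<lambda>n. emp_df U n \<omega> (of_rat q)) \<longlonglongrightarrow> of_rat q"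
    and G2: "\<forall>m. (\<lambda>n. ennreal ((\<Sum>i<n. \<bar>H' (U i \<omega>) - \<phi> m (U i \<omega>)\<bar> powr p) / real n))
               \<longlonglongrightarrow> (\<integral>\<^sup>+t. ennreal (\<bar>H' t - \<phi> m t\<bar> powr p) \<partial>Q)"
    and G3: "\<forall>i. U i \<omega> \<in> {0<..<1}"
  shows "(\<lambda>n. \<integral>\<^sup>+t. ennreal (\<bar>H (gen_inv (emp_df U n \<omega>) t) - H t\<bar> powr p) \<partial>Q) \<longlonglongrightarrow> 0"
proof -
  have p0: "0 < p" using p by simp
  have \<phi>m[measurable]: "\<phi> m \<in> borel_measurable borel" for m
    using \<phi>c by (rule borel_measurable_continuous_onI)
  define \<psi> where "\<psi> m y = \<bar>H' y - \<phi> m y\<bar> powr p" for m y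
  have \<psi>m[measurable]: "\<psi> m \<in> borel_measurable borel" for m unfolding \<psi>_def by measurable
  define c where "c m = (\<integral>\<^sup>+t. ennreal (\<psi> m t) \<partial>Q)" for m
  define G where "G n = gen_inv (emp_df U n \<omega>)" for n
  define L where "L n = (\<integral>\<^sup>+t. ennreal (\<bar>H (G n t) - H t\<bar> powr p) \<partial>Q)" for n
  define D where "D m n = (\<integral>\<^sup>+t. ennreal (\<bar>\<phi> m (G n t) - \<phi> m t\<bar> powr p) \<partial>Q)" for m n
  define avg where "avg m n = (\<Sum>i<n. \<psi> m (U i \<omega>)) / real n" for m n
  define K where "K = ennreal (3 powr p)"
  have Gm: "G n \<in> borel_measurable Q" if "0 < n" for n
    using quantile(2)[OF empm_real_dist[OF that, of U \<omega>]] cdf_empm[OF that, of U \<omega>] by (simp add: G_def)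
  have bound: "L n \<le> K * (ennreal (avg m n) + D m n + c m)" if n: "0 < n" for n m
  proof -
    note Gm' = Gm[OF n]
    have idQ: "(\<lambda>t::real. t) \<in> borel_measurable Q" by (rule Qmeas) simp
    have AEin: "AE t in Q. G n t \<in> {0<..<1}"
    proof -
      have ae1: "AE y in empm U n \<omega>. y \<in> {0<..<1}"
        unfolding empm_def using G3 n
        by (subst AE_distr_iff) (auto simp: pmf_meas AE_measure_pmf_iff)
      have eq: "distr Q borel (G n) = empm U n \<omega>"
        unfolding G_def using quantile(1)[OF empm_real_dist[OF n, of U \<omega>]] cdf_empm[OF n, of U \<omega>] by simp
      have "AE y in distr Q borel (G n). y \<in> {0<..<1}" by (subst eq) (rule ae1)
      then show ?thesis by (rule AE_distrD[OF Gm'])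
    qed
    have "L n \<le> (\<integral>\<^sup>+t. K * (ennreal (\<psi> m (G n t)) + ennreal (\<bar>\<phi> m (G n t) - \<phi> m t\<bar> powr p) + ennreal (\<psi> m t)) \<partial>Q)"
      unfolding L_def
    proof (rule nn_integral_mono_AE)
      show "AE t in Q. ennreal (\<bar>H (G n t) - H t\<bar> powr p) \<le> K * (ennreal (\<psi> m (G n t)) + ennreal (\<bar>\<phi> m (G n t) - \<phi> m t\<bar> powr p) + ennreal (\<psi> m t))"
        using AEin AE_space
      proof eventually_elim
        fix t assume a: "G n t \<in> {0<..<1}" "t \<in> space Q"
        then have e1: "H (G n t) = H' (G n t)" and e2: "H t = H' t" using H'Q by (auto simp: space_Q)
        have "\<bar>H (G n t) - H t\<bar> powr p \<le> 3 powr p * (\<psi> m (G n t) + \<bar>\<phi> m (G n t) - \<phi> m t\<bar> powr p + \<psi> m t)"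
          unfolding e1 e2 \<psi>_def using powr_tri3[OF p0, of "H' (G n t)" "H' t" "\<phi> m (G n t)" "\<phi> m t"]
          by (simp add: abs_minus_commute)
        then show "ennreal (\<bar>H (G n t) - H t\<bar> powr p) \<le> K * (ennreal (\<psi> m (G n t)) + ennreal (\<bar>\<phi> m (G n t) - \<phi> m t\<bar> powr p) + ennreal (\<psi> m t))"
          unfolding K_def
          by (simp add: \<psi>_def ennreal_plus[symmetric] ennreal_mult[symmetric] ennreal_leI del: ennreal_plus)
      qed
    qed
    also have "\<dots> = K * ((\<integral>\<^sup>+t. ennreal (\<psi> m (G n t)) \<partial>Q) + D m n + c m)"
    proof -
      have m1: "(\<lambda>t. ennreal (\<psi> m (G n t))) \<in> borel_measurable Q" using Gm' by measurable
      have m2: "(\<lambda>t. ennreal (\<bar>\<phi> m (G n t) - \<phi> m t\<bar> powr p)) \<in> borel_measurable Q"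
        using Gm' idQ by measurable
      have m3: "(\<lambda>t. ennreal (\<psi> m t)) \<in> borel_measurable Q" by (rule Qmeas) measurable
      show ?thesis unfolding D_def c_def using m1 m2 m3
        by (simp add: nn_integral_cmult nn_integral_add)
    qed
    also have "(\<integral>\<^sup>+t. ennreal (\<psi> m (G n t)) \<partial>Q) = ennreal (avg m n)"
    proof -
      have "(\<integral>\<^sup>+t. ennreal (\<psi> m (G n t)) \<partial>Q) = (\<integral>\<^sup>+y. ennreal (\<psi> m y) \<partial>empm U n \<omega>)"
        using quantile_nn[OF empm_real_dist[OF n, of U \<omega>], of "\<lambda>y. ennreal (\<psi> m y)"] cdf_empm[OF n, of U \<omega>]
        by (simp add: G_def)
      also have "\<dots> = ennreal (avg m n)" unfolding avg_def
        by (rule nn_empm[OF n]) (auto simp: \<psi>_def)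
      finally show ?thesis .
    qed
    finally show ?thesis .
  qed
  have idQ: "(\<lambda>t::real. t) \<in> borel_measurable Q" by (rule Qmeas) simp
  have Dlim: "(\<lambda>n. D m n) \<longlonglongrightarrow> 0" for m
  proof -
    have "(\<lambda>k. D m (Suc k)) \<longlonglongrightarrow> 0"
      unfolding D_def
    proof (rule dom_Q[where w="\<lambda>t. (2 * B m) powr p"])
      show "(\<lambda>t. \<bar>\<phi> m (G (Suc k) t) - \<phi> m t\<bar> powr p) \<in> borel_measurable Q" for k
        using Gm[of "Suc k"] idQ by measurable
      show "\<bar>\<phi> m (G (Suc k) t) - \<phi> m t\<bar> powr p \<le> (2 * B m) powr p" for k t
      proof (rule powr_mono2)
        show "\<bar>\<phi> m (G (Suc k) t) - \<phi> m t\<bar> \<le> 2 * B m"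
          using \<phi>b[of m "G (Suc k) t"] \<phi>b[of m t] by linarith
      qed (use p in auto)
      show "(\<integral>\<^sup>+t. ennreal ((2 * B m) powr p) \<partial>Q) < \<infinity>" by (rule nn_Q_const)
      show "AE t in Q. (\<lambda>k. \<bar>\<phi> m (G (Suc k) t) - \<phi> m t\<bar> powr p) \<longlonglongrightarrow> 0"
      proof (rule AE_I2)
        fix t assume "t \<in> space Q" then have t: "0 < t" "t < 1" by (auto simp: space_Q)
        have conv: "(\<lambda>k. emp_df U (Suc k) \<omega> q) \<longlonglongrightarrow> q" if q: "q \<in> \<rat>" "0 < q" "q < 1" for q
        proof -
          from q(1) obtain r where r: "q = of_rat r" by (auto elim: Rats_cases)
          then have "(\<lambda>n. emp_df U n \<omega> q) \<longlonglongrightarrow> q" using G1[rule_format, of r] q by auto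
          then show ?thesis by (rule LIMSEQ_Suc)
        qed
        have "(\<lambda>k. gen_inv (emp_df U (Suc k) \<omega>) t) \<longlonglongrightarrow> t"
          by (rule ginv_conv[where G="\<lambda>k. emp_df U (Suc k) \<omega>"]) (auto intro: emp_df_mono conv t)
        moreover have "isCont (\<phi> m) t" using \<phi>c[of m] by (simp add: continuous_on_eq_continuous_at)
        ultimately have "(\<lambda>k. \<phi> m (G (Suc k) t)) \<longlonglongrightarrow> \<phi> m t"
          unfolding G_def by (rule isCont_tendsto_compose[rotated])
        then have "(\<lambda>k. \<phi> m (G (Suc k) t) - \<phi> m t) \<longlonglongrightarrow> 0"
          using tendsto_diff[OF _ tendsto_const[of "\<phi> m t"]] by fastforce
        then have "(\<lambda>k. \<bar>\<phi> m (G (Suc k) t) - \<phi> m t\<bar>) \<longlonglongrightarrow> 0" by (simp add: tendsto_rabs_zero_iff)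
        then show "(\<lambda>k. \<bar>\<phi> m (G (Suc k) t) - \<phi> m t\<bar> powr p) \<longlonglongrightarrow> 0"
          using p0 by (intro tendsto_zero_powrI) auto
      qed
    qed auto
    then show ?thesis by (rule LIMSEQ_imp_Suc)
  qed
  have clt: "c m < ennreal (1 / Suc m)" for m using \<phi>a by (simp add: c_def \<psi>_def)
  have avglim: "(\<lambda>n. ennreal (avg m n)) \<longlonglongrightarrow> c m" for m using G2 by (simp add: avg_def c_def \<psi>_def)
  have Rlim: "(\<lambda>n. K * (ennreal (avg m n) + D m n + c m)) \<longlonglongrightarrow> K * (c m + 0 + c m)" for m
    by (intro ennreal_tendsto_cmult tendsto_add avglim Dlim tendsto_const) (simp add: K_def)
  have "L \<longlonglongrightarrow> 0"
  proof (rule order_tendstoI)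
    fix a :: ennreal assume "a < 0" then show "eventually (\<lambda>n. a < L n) sequentially" by simp
  next
    fix \<epsilon> :: ennreal assume "0 < \<epsilon>"
    obtain y where y: "0 < y" "y < \<epsilon>" using dense[OF \<open>0 < \<epsilon>\<close>] by auto
    have yt: "y < top" using y top_greatest[of \<epsilon>] by (meson less_le_trans)
    define r where "r = enn2real y"
    have r: "0 < r" "ennreal r = y" using y yt by (auto simp: r_def enn2real_positive_iff less_top)
    obtain m :: nat where m: "2 * 3 powr p / r < real (Suc m)" using reals_Archimedean2 by (metis of_nat_Suc less_trans lessI of_nat_less_iff) 
    have "K * (c m + 0 + c m) \<le> K * (ennreal (1 / Suc m) + ennreal (1 / Suc m))"
      using clt[of m] by (intro mult_left_mono add_mono) (auto intro: less_imp_le)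
    also have "\<dots> = ennreal (2 * 3 powr p / Suc m)"
      unfolding K_def by (simp add: ennreal_plus[symmetric] ennreal_mult[symmetric] field_simps del: ennreal_plus)
    also have "\<dots> < ennreal r"
    proof (rule ennreal_lessI[OF r(1)])
      show "2 * 3 powr p / real (Suc m) < r" using m r(1) by (simp add: field_simps)
    qed
    finally have "K * (c m + 0 + c m) < \<epsilon>" using r y by simp
    then have "eventually (\<lambda>n. K * (ennreal (avg m n) + D m n + c m) < \<epsilon>) sequentially"
      by (rule order_tendstoD(2)[OF Rlim])
    moreover have "eventually (\<lambda>n. 0 < n) sequentially" by (rule eventually_gt_at_top)
    ultimately show "eventually (\<lambda>n. L n < \<epsilon>) sequentially"
    proof eventually_elim
      fix n :: nat assume "K * (ennreal (avg m n) + D m n + c m) < \<epsilon>" "0 < n"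
      then show "L n < \<epsilon>" using bound[of n m] by (meson le_less_trans)
    qed
  qed
  then show ?thesis unfolding L_def G_def .
qed


theorem lemma3:
  fixes M :: "'a measure" and X U :: "nat \<Rightarrow> 'a \<Rightarrow> real"
    and h :: "real \<Rightarrow> real" and p :: real
  assumes "prob_space M"
    and "strictly_stationary M X" and "ergodic_process M X"
    and "h \<in> borel_measurable borel"
    and "1 \<le> p"
    and "integrable M (\<lambda>\<omega>. \<bar>h (X 0 \<omega>)\<bar> powr p)"
    and "strictly_stationary M U" and "ergodic_process M U"
    and "\<And>i. distr M borel (U i) = uniform_measure lborel {0..1}"
  shows "let F = (\<lambda>x. measure M {\<omega> \<in> space M. X 0 \<omega> \<le> x});
             H = (\<lambda>t. h (gen_inv F t))
         in AE \<omega> in M.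
              (\<lambda>n. \<integral>\<^sup>+ t. ennreal (indicator {0..1} t *
                    \<bar>H (gen_inv (emp_df U n \<omega>) t) - H t\<bar> powr p) \<partial>lborel)
              \<longlonglongrightarrow> 0"
proof -
  interpret M: prob_space M by fact
  have p0: "0 < p" using assms(5) by simp
  have Xm[measurable]: "X i \<in> borel_measurable M" for i using assms(2) by (simp add: strictly_stationary_def)
  have Um[measurable]: "U i \<in> borel_measurable M" for i using assms(7) by (simp add: strictly_stationary_def)
  note hm[measurable] = assms(4)
  define F where "F = (\<lambda>x. measure M {\<omega> \<in> space M. X 0 \<omega> \<le> x})"
  define H where "H = (\<lambda>t. h (gen_inv F t))"
  define \<mu>X where "\<mu>X = distr M borel (X 0)"
  have \<mu>Xd: "real_distribution \<mu>X"
    unfolding \<mu>X_def real_distribution_def real_distribution_axioms_def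
    by (auto intro: M.prob_space_distr)
  have cdfX: "cdf \<mu>X = F"
  proof (rule ext)
    fix x
    have "cdf \<mu>X x = measure M (X 0 -` {..x} \<inter> space M)"
      unfolding cdf_def \<mu>X_def by (subst measure_distr) auto
    also have "X 0 -` {..x} \<inter> space M = {\<omega> \<in> space M. X 0 \<omega> \<le> x}" by auto
    finally show "cdf \<mu>X x = F x" by (simp add: F_def)
  qed
  have gFm[measurable]: "gen_inv F \<in> borel_measurable Q" using quantile(2)[OF \<mu>Xd] cdfX by simp
  have Hm[measurable]: "H \<in> borel_measurable Q" unfolding H_def by measurable
  define H' where "H' t = indicator {0<..<1} t * H t" for t
  have H'm[measurable]: "H' \<in> borel_measurable borel"
  proof -
    have "(\<lambda>x. indicator {0<..<1} x *\<^sub>R H x) \<in> borel_measurable lborel"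
      using Hm by (subst (asm) borel_measurable_restrict_space_iff) auto
    then show ?thesis by (simp add: H'_def[abs_def])
  qed
  have H'Q: "H' t = H t" if "t \<in> {0<..<1}" for t using that by (simp add: H'_def)
  have finH: "(\<integral>\<^sup>+t. ennreal (\<bar>H' t\<bar> powr p) \<partial>Q) < \<infinity>"
  proof -
    have "(\<integral>\<^sup>+t. ennreal (\<bar>H' t\<bar> powr p) \<partial>Q) = (\<integral>\<^sup>+t. ennreal (\<bar>h (gen_inv (cdf \<mu>X) t)\<bar> powr p) \<partial>Q)"
      by (rule nn_integral_cong) (simp add: space_Q H'Q H_def cdfX)
    also have "\<dots> = (\<integral>\<^sup>+y. ennreal (\<bar>h y\<bar> powr p) \<partial>\<mu>X)"
      by (rule quantile_nn[OF \<mu>Xd]) measurable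
    also have "\<dots> = (\<integral>\<^sup>+\<omega>. ennreal (\<bar>h (X 0 \<omega>)\<bar> powr p) \<partial>M)"
      unfolding \<mu>X_def by (subst nn_integral_distr) auto
    also have "\<dots> < \<infinity>"
      using assms(6) by (simp add: integrable_iff_bounded)
    finally show ?thesis .
  qed
  have "\<forall>m::nat. \<exists>\<phi> B. continuous_on UNIV \<phi> \<and> (\<forall>x. \<bar>\<phi> x\<bar> \<le> B) \<and>
           (\<integral>\<^sup>+t. ennreal (\<bar>H' t - \<phi> t\<bar> powr p) \<partial>Q) < ennreal (1 / Suc m)"
    using approx_cont[OF H'm assms(5) finH] by simp
  then obtain \<phi> B where \<phi>c: "\<And>m. continuous_on UNIV (\<phi> m)" and \<phi>b: "\<And>m x. \<bar>\<phi> m x\<bar> \<le> B m"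
    and \<phi>a: "\<And>m. (\<integral>\<^sup>+t. ennreal (\<bar>H' t - \<phi> m t\<bar> powr p) \<partial>Q) < ennreal (1 / Suc m)"
    by metis
  have \<phi>m[measurable]: "\<phi> m \<in> borel_measurable borel" for m
    using \<phi>c by (rule borel_measurable_continuous_onI)
  have G1: "AE \<omega> in M. \<forall>q::rat. 0 < (of_rat q::real) \<and> of_rat q < (1::real) \<longrightarrow>
              (\<lambda>n. emp_df U n \<omega> (of_rat q)) \<longlonglongrightarrow> of_rat q"
  proof (subst AE_all_countable, intro allI)
    fix q :: rat
    show "AE \<omega> in M. 0 < (of_rat q::real) \<and> of_rat q < (1::real) \<longrightarrow>
              (\<lambda>n. emp_df U n \<omega> (of_rat q)) \<longlonglongrightarrow> of_rat q"
    proof (cases "0 < (of_rat q::real) \<and> of_rat q < (1::real)")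
      case True
      let ?q = "of_rat q :: real"
      let ?g = "\<lambda>t. indicator {..?q} t :: real"
      have gint: "(\<integral>\<^sup>+t. ennreal (?g t) \<partial>Q) = ennreal ?q"
      proof -
        have "(\<integral>\<^sup>+t. ennreal (?g t) \<partial>Q) = (\<integral>\<^sup>+t. ennreal (?g t) * indicator {0<..<1} t \<partial>lborel)"
          by (rule nn_integral_restrict_space) simp
        also have "\<dots> = (\<integral>\<^sup>+t. indicator {0<..?q} t \<partial>lborel)"
        proof (intro nn_integral_cong)
          have q1: "\<forall>x. x \<le> ?q \<longrightarrow> x < 1" using True by (meson le_less_trans)
          fix t show "ennreal (?g t) * indicator {0<..<1} t = indicator {0<..?q} t"
            using q1 by (auto simp: indicator_def)
        qed
        also have "\<dots> = ennreal ?q" using True by simp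
        finally show ?thesis .
      qed
      have "AE \<omega> in M. (\<lambda>n. (\<Sum>i<n. ?g (U i \<omega>)) / real n) \<longlonglongrightarrow> enn2real (\<integral>\<^sup>+t. ennreal (?g t) \<partial>Q)"
        by (rule erg_real[OF assms(1) assms(7) assms(8) assms(9)]) (use gint in auto)
      then show ?thesis
      proof eventually_elim
        fix \<omega> assume a: "(\<lambda>n. (\<Sum>i<n. ?g (U i \<omega>)) / real n) \<longlonglongrightarrow> enn2real (\<integral>\<^sup>+t. ennreal (?g t) \<partial>Q)"
        have "emp_df U n \<omega> ?q = (\<Sum>i<n. ?g (U i \<omega>)) / real n" for n
        proof -
          have "(\<Sum>i<n. ?g (U i \<omega>)) = (\<Sum>i<n. indicator {i. U i \<omega> \<le> ?q} i)"
            by (intro sum.cong) (auto simp: indicator_def)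
          also have "\<dots> = real (card ({..<n} \<inter> {i. U i \<omega> \<le> ?q}))"
          proof -
            have "(\<Sum>i<n. indicator {i. U i \<omega> \<le> ?q} i :: real) = real (\<Sum>i<n. indicator {i. U i \<omega> \<le> ?q} i :: nat)"
              by (simp add: of_nat_sum indicator_def)
            then show ?thesis by (simp add: sum_indicator_eq_card)
          qed
          also have "{..<n} \<inter> {i. U i \<omega> \<le> ?q} = {i. i < n \<and> U i \<omega> \<le> ?q}" by auto
          finally show ?thesis by (simp add: emp_df_def)
        qed
        then show "0 < ?q \<and> ?q < 1 \<longrightarrow> (\<lambda>n. emp_df U n \<omega> ?q) \<longlonglongrightarrow> ?q"
          using a gint True by simp
      qed
    qed auto
  qed
  have G2: "AE \<omega> in M. \<forall>m. (\<lambda>n. ennreal ((\<Sum>i<n. \<bar>H' (U i \<omega>) - \<phi> m (U i \<omega>)\<bar> powr p) / real n))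
               \<longlonglongrightarrow> (\<integral>\<^sup>+t. ennreal (\<bar>H' t - \<phi> m t\<bar> powr p) \<partial>Q)"
  proof (subst AE_all_countable, intro allI)
    fix m
    show "AE \<omega> in M. (\<lambda>n. ennreal ((\<Sum>i<n. \<bar>H' (U i \<omega>) - \<phi> m (U i \<omega>)\<bar> powr p) / real n))
               \<longlonglongrightarrow> (\<integral>\<^sup>+t. ennreal (\<bar>H' t - \<phi> m t\<bar> powr p) \<partial>Q)"
      by (rule erg_nn[OF assms(1) assms(7) assms(8) assms(9)]) (use \<phi>a[of m] in \<open>auto intro: less_trans\<close>)
  qed
  have G3: "AE \<omega> in M. \<forall>i. U i \<omega> \<in> {0<..<1}"
  proof (subst AE_all_countable, intro allI)
    fix i
    have "AE x in lborel. x \<in> {0..1::real} \<longrightarrow> x \<in> {0<..<1}"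
      using AE_lborel_singleton[of 0] AE_lborel_singleton[of 1] by eventually_elim auto
    then have "AE x in uniform_measure lborel {0..1::real}. x \<in> {0<..<1}"
      by (subst AE_uniform_measure) auto
    then have "AE x in distr M borel (U i). x \<in> {0<..<1}" by (subst assms(9))
    then show "AE \<omega> in M. U i \<omega> \<in> {0<..<1}" by (rule AE_distrD[OF Um])
  qed
  have main: "AE \<omega> in M. (\<lambda>n. \<integral>\<^sup>+t. ennreal (\<bar>H (gen_inv (emp_df U n \<omega>) t) - H t\<bar> powr p) \<partial>Q) \<longlonglongrightarrow> 0"
    using G1 G2 G3
  proof eventually_elim
    case (elim \<omega>)
    show ?case
      by (rule main_omega[OF assms(5) Hm H'm H'Q \<phi>c \<phi>b \<phi>a elim(1) elim(2) elim(3)])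
  qed
  have eq: "(\<integral>\<^sup>+ t. ennreal (indicator {0..1} t * \<bar>H (gen_inv (emp_df U n \<omega>) t) - H t\<bar> powr p) \<partial>lborel)
      = (\<integral>\<^sup>+t. ennreal (\<bar>H (gen_inv (emp_df U n \<omega>) t) - H t\<bar> powr p) \<partial>Q)" for n \<omega>
    by (rule Q_to_lborel) simp
  have main2: "AE \<omega> in M. (\<lambda>n. \<integral>\<^sup>+ t. ennreal (indicator {0..1} t *
                    \<bar>h (gen_inv F (gen_inv (emp_df U n \<omega>) t)) - h (gen_inv F t)\<bar> powr p) \<partial>lborel) \<longlonglongrightarrow> 0"
    using main[unfolded eq[symmetric]] unfolding H_def .
  show ?thesis
    unfolding Let_def F_def[symmetric] by (rule main2)
qed



end
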